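(* Consider any trajectory of the hybrid devil-stick model below, and suppose that for some $k$, $D\rho_k=0$ and $D\rho_{k+1}=0$. Then $$S_m\,\omega_{k+1}-S_p\,\omega_k=-K\sin\theta_k\left[\frac{1}{\omega_k}+\frac{1}{\omega_{k+1}}\right],$$ where $K=\frac{g(\Delta\theta^* )^2}{4R\sin(\Delta\theta^*/2)}$, $S_m=\sin(\phi-\Delta\theta^*/2)$, $S_p=\sin(\phi+\Delta\theta^*/2)$. In particular, if $\phi=\pi/2$ (resp. $\phi=-\pi/2$) this becomes $\omega_{k+1}-\omega_k=P\sin\theta_k\left[\frac1{\omega_k}+\frac1{\omega_{k+1}}\right]$ with $P=-\frac{g(\Delta\theta^* )^2}{2R\sin\Delta\theta^*}$ (resp. $P=\frac{g(\Delta\theta^* )^2}{2R\sin\Delta\theta^*}$).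
   Context: Constants: $m,J,g,R>0$, $\Delta\theta^*\in(0,\pi)$, $\phi\in(-\pi,\pi]$. The hybrid model consists of sequences $h(k),v(k)\in\mathbb{R}^2$, $\theta_k\in\mathbb{R}$, $\omega_k>0$, inputs $I_k,r_k\in\mathbb{R}$ and $\delta_k>0$ satisfying, for all $k\ge1$: $h(k+1)=h(k)+v(k)\delta_k+\begin{bmatrix}-\sin\theta_k\\ \cos\theta_k\end{bmatrix}\frac{I_k\delta_k}{m}+\begin{bmatrix}0\\-\tfrac12 g\delta_k^2\end{bmatrix}$, $v(k+1)=v(k)+\begin{bmatrix}-\sin\theta_k\\ \cos\theta_k\end{bmatrix}\frac{I_k}{m}+\begin{bmatrix}0\\-g\delta_k\end{bmatrix}$, $\theta_{k+1}=\theta_k+\Delta\theta^*$, $\omega_{k+1}=\omega_k+\frac{I_kr_k}{J}$, $\delta_k=\Delta\theta^*/\omega_{k+1}$. Define $\Phi(\theta)=\begin{bmatrix}R\cos(\theta-\phi)\\ R\sin(\theta-\phi)\end{bmatrix}$, $\Psi(\theta,\omega)=\frac{\omega}{\Delta\theta^*}[\Phi(\theta)-\Phi(\theta-\Delta\theta^* )]-\begin{bmatrix}0\\ \frac{g\Delta\theta^*}{2\omega}\end{bmatrix}$, $\rho_k=h(k)-\Phi(\theta_k)$ and $D\rho_k=v(k)-\Psi(\theta_k,\omega_k)$. *)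

theory Defs
  imports "HOL-Analysis.Analysis"
begin

definition Phi :: "real \<Rightarrow> real \<Rightarrow> real \<Rightarrow> real \<times> real" where
  "Phi R \<phi> \<theta> = (R * cos (\<theta> - \<phi>), R * sin (\<theta> - \<phi>))"

definition Psi :: "real \<Rightarrow> real \<Rightarrow> real \<Rightarrow> real \<Rightarrow> real \<Rightarrow> real \<Rightarrow> real \<times> real" where
  "Psi g R \<phi> d\<theta> \<theta> \<omega> =
     (\<omega> / d\<theta>) *\<^sub>R (Phi R \<phi> \<theta> - Phi R \<phi> (\<theta> - d\<theta>)) - (0, g * d\<theta> / (2 * \<omega>))"

definition devil_traj ::
  "real \<Rightarrow> real \<Rightarrow> real \<Rightarrow> real \<Rightarrow>
   (nat \<Rightarrow> real \<times> real) \<Rightarrow> (nat \<Rightarrow> real \<times> real) \<Rightarrow> (nat \<Rightarrow> real) \<Rightarrow> (nat \<Rightarrow> real) \<Rightarrow>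
   (nat \<Rightarrow> real) \<Rightarrow> (nat \<Rightarrow> real) \<Rightarrow> (nat \<Rightarrow> real) \<Rightarrow> bool" where
  "devil_traj m J g d\<theta> h v \<theta> \<omega> I r \<delta> \<longleftrightarrow>
     (\<forall>k\<ge>1.
        \<omega> k > 0 \<and> \<delta> k > 0 \<and>
        h (k+1) = h k + \<delta> k *\<^sub>R v k + (I k * \<delta> k / m) *\<^sub>R (- sin (\<theta> k), cos (\<theta> k))
                  + (0, - (1/2) * g * (\<delta> k)\<^sup>2) \<and>
        v (k+1) = v k + (I k / m) *\<^sub>R (- sin (\<theta> k), cos (\<theta> k)) + (0, - g * \<delta> k) \<and>
        \<theta> (k+1) = \<theta> k + d\<theta> \<and>
        \<omega> (k+1) = \<omega> k + I k * r k / J \<and>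
        \<delta> k = d\<theta> / \<omega> (k+1))"

end

theory Submission
  imports Defs
begin

lemma divaux: "(c::real) > 0 \<Longrightarrow> c * y = x \<Longrightarrow> y = (1/c) * x"
  by (simp add: field_simps)

theorem mainTheorem6:
  fixes m J g R d\<theta> \<phi> :: real
    and h v :: "nat \<Rightarrow> real \<times> real"
    and \<theta> \<omega> I r \<delta> :: "nat \<Rightarrow> real"
    and k :: nat
  assumes "m > 0" "J > 0" "g > 0" "R > 0"
    and "0 < d\<theta>" "d\<theta> < pi"
    and "-pi < \<phi>" "\<phi> \<le> pi"
    and "devil_traj m J g d\<theta> h v \<theta> \<omega> I r \<delta>"
    and "k \<ge> 1"
    and "v k - Psi g R \<phi> d\<theta> (\<theta> k) (\<omega> k) = 0"
    and "v (k+1) - Psi g R \<phi> d\<theta> (\<theta> (k+1)) (\<omega> (k+1)) = 0"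
  shows "sin (\<phi> - d\<theta>/2) * \<omega> (k+1) - sin (\<phi> + d\<theta>/2) * \<omega> k
           = - (g * d\<theta>\<^sup>2 / (4 * R * sin (d\<theta>/2))) * sin (\<theta> k) * (1 / \<omega> k + 1 / \<omega> (k+1))
         \<and> (\<phi> = pi/2 \<longrightarrow> \<omega> (k+1) - \<omega> k
           = (- (g * d\<theta>\<^sup>2 / (2 * R * sin d\<theta>))) * sin (\<theta> k) * (1 / \<omega> k + 1 / \<omega> (k+1)))
         \<and> (\<phi> = -pi/2 \<longrightarrow> \<omega> (k+1) - \<omega> k
           = (g * d\<theta>\<^sup>2 / (2 * R * sin d\<theta>)) * sin (\<theta> k) * (1 / \<omega> k + 1 / \<omega> (k+1)))"
proof -
  define t where "t = \<theta> k"
  define w0 where "w0 = \<omega> k"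
  define w1 where "w1 = \<omega> (k+1)"
  define d where "d = d\<theta>"
  have tr: "\<omega> k > 0 \<and> \<delta> k > 0 \<and>
        v (k+1) = v k + (I k / m) *\<^sub>R (- sin (\<theta> k), cos (\<theta> k)) + (0, - g * \<delta> k) \<and>
        \<theta> (k+1) = \<theta> k + d\<theta> \<and> \<delta> k = d\<theta> / \<omega> (k+1)"
    using assms(9,10) unfolding devil_traj_def by blast
  have w0: "w0 > 0" using tr w0_def by simp
  have w1: "w1 > 0" using tr w1_def assms(5) by (auto simp: zero_less_divide_iff)
  have d: "d > 0" "d < pi" using assms(5,6) d_def by auto
  have vk: "v k = Psi g R \<phi> d\<theta> (\<theta> k) (\<omega> k)" using assms(11) by simp
  have vk1: "v (k+1) = Psi g R \<phi> d\<theta> (\<theta> k + d\<theta>) (\<omega> (k+1))" using assms(12) tr by simp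
  obtain a b where ab: "v k = (a,b)" by fastforce
  obtain a' b' where ab': "v (k+1) = (a',b')" by fastforce
  have e1: "a' = a - (I k / m) * sin t" and e2: "b' = b + (I k / m) * cos t - g * (d / w1)"
    using tr ab ab' unfolding t_def d_def w1_def by auto
  have ea: "a = (w0/d) * (R * cos (t - \<phi>) - R * cos (t - d - \<phi>))"
   and eb: "b = (w0/d) * (R * sin (t - \<phi>) - R * sin (t - d - \<phi>)) - g * d / (2 * w0)"
    using vk ab unfolding Psi_def Phi_def t_def w0_def d_def by auto
  have ea': "a' = (w1/d) * (R * cos (t + d - \<phi>) - R * cos (t - \<phi>))"
   and eb': "b' = (w1/d) * (R * sin (t + d - \<phi>) - R * sin (t - \<phi>)) - g * d / (2 * w1)"
    using vk1 ab' unfolding Psi_def Phi_def t_def w1_def d_def by auto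
  have key: "a' * cos t + b' * sin t = a * cos t + b * sin t - g * (d / w1) * sin t"
    unfolding e1 e2 by (simp add: algebra_simps)
  have c1: "cos (t + d - \<phi>) * cos t + sin (t + d - \<phi>) * sin t = cos (d - \<phi>)"
    using cos_diff[of "t + d - \<phi>" t] by (simp add: algebra_simps)
  have c2: "cos (t - \<phi>) * cos t + sin (t - \<phi>) * sin t = cos \<phi>"
    using cos_diff[of "t - \<phi>" t] by (simp add: algebra_simps)
  have c3: "cos (t - d - \<phi>) * cos t + sin (t - d - \<phi>) * sin t = cos (d + \<phi>)"
  proof -
    have "t - d - \<phi> - t = -(d+\<phi>)" by simp
    hence "cos (t - d - \<phi> - t) = cos (d+\<phi>)" by (metis cos_minus)
    thus ?thesis using cos_diff[of "t - d - \<phi>" t] by linarith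
  qed
  have L0: "a' * cos t + b' * sin t = (w1 * R / d) * ((cos (t + d - \<phi>) * cos t + sin (t + d - \<phi>) * sin t) - (cos (t - \<phi>) * cos t + sin (t - \<phi>) * sin t)) - g * d * sin t / (2 * w1)"
    unfolding ea' eb' by (simp add: algebra_simps)
  have L: "a' * cos t + b' * sin t = (w1 * R / d) * (cos (d - \<phi>) - cos \<phi>) - g * d * sin t / (2 * w1)"
    using L0 unfolding c1 c2 .
  have R0: "a * cos t + b * sin t = (w0 * R / d) * ((cos (t - \<phi>) * cos t + sin (t - \<phi>) * sin t) - (cos (t - d - \<phi>) * cos t + sin (t - d - \<phi>) * sin t)) - g * d * sin t / (2 * w0)"
    unfolding ea eb by (simp add: algebra_simps)
  have Rr: "a * cos t + b * sin t = (w0 * R / d) * (cos \<phi> - cos (d + \<phi>)) - g * d * sin t / (2 * w0)"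
    using R0 unfolding c2 c3 .
  have s1: "cos (d - \<phi>) - cos \<phi> = 2 * sin (d/2) * sin (\<phi> - d/2)"
  proof -
    have e: "d - \<phi> = d/2 - (\<phi> - d/2)" "\<phi> = d/2 + (\<phi> - d/2)" by auto
    show ?thesis apply (subst e(1)) apply (subst (2) e(2)) unfolding cos_diff cos_add by simp
  qed
  have s2: "cos \<phi> - cos (d + \<phi>) = 2 * sin (d/2) * sin (\<phi> + d/2)"
  proof -
    have e: "d + \<phi> = d/2 + (\<phi> + d/2)" "\<phi> = (\<phi> + d/2) - d/2" by auto
    show ?thesis apply (subst e(1)) apply (subst (1) e(2)) unfolding cos_diff cos_add by simp
  qed
  define S where "S = sin (d/2)"
  define C where "C = cos (d/2)"
  have S: "S > 0" unfolding S_def using d by (intro sin_gt_zero) auto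
  have C: "C > 0" unfolding C_def using d by (intro cos_gt_zero) auto
  have sd: "sin d = 2 * S * C" unfolding S_def C_def using sin_double[of "d/2"] by simp
  have eq: "(w1 * R / d) * (2 * S * sin (\<phi> - d/2)) - g * d * sin t / (2 * w1)
      = (w0 * R / d) * (2 * S * sin (\<phi> + d/2)) - g * d * sin t / (2 * w0) - g * (d / w1) * sin t"
    using key L Rr s1 s2 unfolding S_def by simp
  have E: "(2 * R * S / d) * (sin (\<phi> - d/2) * w1 - sin (\<phi> + d/2) * w0) = -(g * d * sin t / 2)*(1/w0+1/w1)"
  proof -
    have "(2 * R * S / d) * (sin (\<phi> - d/2) * w1 - sin (\<phi> + d/2) * w0)
       = (w1 * R / d) * (2 * S * sin (\<phi> - d/2)) - (w0 * R / d) * (2 * S * sin (\<phi> + d/2))"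
      by (simp add: algebra_simps)
    also have "\<dots> = g * d * sin t / (2 * w1) - g * d * sin t / (2 * w0) - g * (d / w1) * sin t"
    proof -
      have aux: "\<And>a b c e f::real. a - b = c - e - f \<Longrightarrow> a - c = b - e - f" by linarith
      show ?thesis by (rule aux[OF eq])
    qed
    also have "\<dots> = -(g * d * sin t / 2)*(1/w0+1/w1)"
      using w0 w1 by (simp add: field_simps)
    finally show ?thesis .
  qed
  have main: "sin (\<phi> - d/2) * w1 - sin (\<phi> + d/2) * w0 = - (g * d\<^sup>2 / (4 * R * S)) * sin t * (1 / w0 + 1 / w1)"
  proof -
    have "sin (\<phi> - d/2) * w1 - sin (\<phi> + d/2) * w0 = (d / (2 * R * S)) * ((2 * R * S / d) * (sin (\<phi> - d/2) * w1 - sin (\<phi> + d/2) * w0))"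
      using S d assms(4) by (simp add: field_simps)
    also have "\<dots> = (d / (2 * R * S)) * (-(g * d * sin t / 2)*(1/w0+1/w1))" using E by simp
    also have "\<dots> = - (g * d\<^sup>2 / (4 * R * S)) * sin t * (1 / w0 + 1 / w1)"
      using S d assms(4) by (simp add: field_simps power2_eq_square)
    finally show ?thesis .
  qed
  have p1: "\<phi> = pi/2 \<longrightarrow> w1 - w0 = (- (g * d\<^sup>2 / (2 * R * sin d))) * sin t * (1 / w0 + 1 / w1)"
  proof
    assume h: "\<phi> = pi/2"
    have "sin (\<phi> - d/2) = C" "sin (\<phi> + d/2) = C" unfolding h C_def by (simp_all add: sin_diff sin_add)
    hence "C * (w1 - w0) = - (g * d\<^sup>2 / (4 * R * S)) * sin t * (1 / w0 + 1 / w1)"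
      using main by (simp add: algebra_simps)
    hence "w1 - w0 = (1/C) * (- (g * d\<^sup>2 / (4 * R * S)) * sin t * (1 / w0 + 1 / w1))"
      by (rule divaux[OF C])
    also have "\<dots> = (- (g * d\<^sup>2 / (2 * R * sin d))) * sin t * (1 / w0 + 1 / w1)"
      unfolding sd using C S assms(4) by (simp add: field_simps)
    finally show "w1 - w0 = (- (g * d\<^sup>2 / (2 * R * sin d))) * sin t * (1 / w0 + 1 / w1)" .
  qed
  have p2: "\<phi> = -pi/2 \<longrightarrow> w1 - w0 = (g * d\<^sup>2 / (2 * R * sin d)) * sin t * (1 / w0 + 1 / w1)"
  proof
    assume h: "\<phi> = -pi/2"
    have "sin (\<phi> - d/2) = -C" "sin (\<phi> + d/2) = -C" unfolding h C_def by (simp_all add: sin_diff sin_add)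
    hence "C * (w1 - w0) = (g * d\<^sup>2 / (4 * R * S)) * sin t * (1 / w0 + 1 / w1)"
      using main by (simp add: algebra_simps)
    hence "w1 - w0 = (1/C) * ((g * d\<^sup>2 / (4 * R * S)) * sin t * (1 / w0 + 1 / w1))"
      by (rule divaux[OF C])
    also have "\<dots> = (g * d\<^sup>2 / (2 * R * sin d)) * sin t * (1 / w0 + 1 / w1)"
      unfolding sd using C S assms(4) by (simp add: field_simps)
    finally show "w1 - w0 = (g * d\<^sup>2 / (2 * R * sin d)) * sin t * (1 / w0 + 1 / w1)" .
  qed
  show ?thesis using main p1 p2 unfolding t_def w0_def w1_def d_def S_def by simp
qed

end
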